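(* For every integer $m\ge0$ and every $n\ge1$, $$v_n\!\left(1,m,\tfrac1q,q\right)=q^{\binom n2}\,\frac{[2m+n-1]\,[2m+n-2]\cdots[2m+1]}{[2m+2n-2]\,[2m+2n-4]\cdots[2m+2]},$$ where numerator and denominator each have $n-1$ factors (empty products equal $1$).
   Context: $q$ is an indeterminate; $[n]=\frac{1-q^n}{1-q}$, $[n]!=[1]\cdots[n]$, $[0]!=1$, $(a;q)_n=(1-a)(1-qa)\cdots(1-q^{n-1}a)$, $(a;q)_0=1$. For an integer $m\ge 0$ and indeterminates $x,s$, $$v_n(x,m,s,q)=\sum_{k=0}^{\lfloor n/2\rfloor}(-s)^kq^{k^2}\frac{[n]!}{[k]!\,[n-2k]!}\,\frac{[m+n-k-1]!}{[m+n-1]!}\,\frac{1}{(-q;q)_k\,(-q^{n+m-k};q)_k}\,x^{n-2k}\quad(n\ge1),\qquad v_0=1.$$ *)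

theory Defs
  imports "HOL-Computational_Algebra.Computational_Algebra"
begin

definition qvar :: "rat poly fract" where
  "qvar = Fract [:0, 1:] 1"

definition qint :: "'a::field \<Rightarrow> nat \<Rightarrow> 'a" where
  "qint q n = (1 - q ^ n) / (1 - q)"

definition qfact :: "'a::field \<Rightarrow> nat \<Rightarrow> 'a" where
  "qfact q n = (\<Prod>i = 1..n. qint q i)"

definition qpoch :: "'a::field \<Rightarrow> 'a \<Rightarrow> nat \<Rightarrow> 'a" where
  "qpoch a q n = (\<Prod>i = 0..<n. 1 - q ^ i * a)"

definition vpoly :: "nat \<Rightarrow> 'a::field \<Rightarrow> nat \<Rightarrow> 'a \<Rightarrow> 'a \<Rightarrow> 'a" where
  "vpoly n x m s q =
     (if n = 0 then 1 else
      (\<Sum>k = 0..n div 2.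
         (- s) ^ k * q ^ (k ^ 2)
         * (qfact q n / (qfact q k * qfact q (n - 2 * k)))
         * (qfact q (m + n - k - 1) / qfact q (m + n - 1))
         * (1 / (qpoch (- q) q k * qpoch (- (q ^ (n + m - k))) q k))
         * x ^ (n - 2 * k)))"

end

theory Submission
  imports Defs
begin

lemma qfact_Suc: "qfact q (Suc n) = qfact q n * qint q (Suc n)"
  unfolding qfact_def by (simp add: prod.nat_ivl_Suc' mult.commute)

lemma qfact_0[simp]: "qfact q 0 = 1"
  unfolding qfact_def by simp

lemma qint_0[simp]: "qint q 0 = 0"
  unfolding qint_def by simp

lemma qint_double: "qint q (2*j) = qint q j * (1 + q^j)"
  unfolding qint_def by (simp add: power_mult[symmetric] mult.commute[of 2] power2_eq_square
      power_mult field_simps)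

lemma qpoch_Suc: "qpoch a q (Suc k) = qpoch a q k * (1 - q^k * a)"
  unfolding qpoch_def by simp

lemma qpoch_shift: "qpoch a q k * (1 - q^k * a) = (1 - a) * qpoch (q*a) q k"
proof (induction k)
  case 0 then show ?case by (simp add: qpoch_def)
next
  case (Suc k)
  have "qpoch a q (Suc k) * (1 - q ^ Suc k * a) = (qpoch a q k * (1 - q^k * a)) * (1 - q ^ Suc k * a)"
    by (simp add: qpoch_Suc)
  also have "\<dots> = ((1 - a) * qpoch (q*a) q k) * (1 - q ^ Suc k * a)"
    using Suc by simp
  also have "\<dots> = (1 - a) * (qpoch (q*a) q k * (1 - q^k * (q*a)))"
    by (simp add: mult_ac)
  also have "\<dots> = (1 - a) * qpoch (q*a) q (Suc k)" by (simp add: qpoch_Suc)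
  finally show ?case .
qed

locale qgood =
  fixes q :: "'a::field"
  assumes q0: "q \<noteq> 0"
    and q1: "\<And>j. j \<ge> 1 \<Longrightarrow> q^j \<noteq> 1"
    and q2: "\<And>j. j \<ge> 1 \<Longrightarrow> q^j \<noteq> -1"
begin

lemma qne1: "1 - q \<noteq> 0" using q1[of 1] by auto

lemma qint_nz: "j \<ge> 1 \<Longrightarrow> qint q j \<noteq> 0"
  unfolding qint_def using q1[of j] qne1 by auto

lemma qint_Suc_nz[simp]: "qint q (Suc j) \<noteq> 0"
  using qint_nz by simp

lemma qfact_nz[simp]: "qfact q n \<noteq> 0"
  unfolding qfact_def using qint_nz by (auto simp: prod_zero_iff)

lemma qpoch_nz: "j \<ge> 1 \<Longrightarrow> qpoch (- (q^j)) q k \<noteq> 0"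
proof -
  assume j: "j \<ge> 1"
  have "1 - q^i * (- (q^j)) \<noteq> 0" for i
  proof
    assume "1 - q^i * (- (q^j)) = 0"
    then have "q^(i+j) = -1" by (simp add: power_add add_eq_0_iff2 equation_minus_iff)
    with q2[of "i+j"] j show False by simp
  qed
  then show ?thesis unfolding qpoch_def by (simp add: prod_zero_iff)
qed

lemma qpoch_nz1[simp]: "qpoch (- q) q k \<noteq> 0"
  using qpoch_nz[of 1] by simp

lemma onepq_nz: "j \<ge> 1 \<Longrightarrow> 1 + q^j \<noteq> 0"
  using q2[of j] by (auto simp: add_eq_0_iff2 equation_minus_iff)

end

definition tf :: "'a::field \<Rightarrow> nat \<Rightarrow> nat \<Rightarrow> nat \<Rightarrow> 'a" where
  "tf q m n k = (- (1/q))^k * q^(k^2) * (qfact q n / (qfact q k * qfact q (n - 2*k)))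
     * (qfact q (m+n-k-1) / qfact q (m+n-1)) * (1 / (qpoch (- q) q k * qpoch (- (q^(n+m-k))) q k))"

definition tt :: "'a::field \<Rightarrow> nat \<Rightarrow> nat \<Rightarrow> nat \<Rightarrow> 'a" where
  "tt q m n k = (if 2*k \<le> n then tf q m n k else 0)"

lemma qpoch_Suc': "qpoch a q (Suc k) = (1 - a) * qpoch (q*a) q k"
  using qpoch_shift[of a q k] by (simp add: qpoch_Suc)

lemma qfact_2: "qfact q (e+2) = qfact q e * qint q (e+1) * qint q (e+2)"
  using qfact_Suc[of q "Suc e"] qfact_Suc[of q e] by simp

context qgood begin

lemma pow_step: "(- (1/q))^(Suc k) * q^((Suc k)^2) = (- (1/q))^k * q^(k^2) * (- (q^(2*k)))"
proof -
  have "(Suc k)^2 = k^2 + 2*k + 1" by (simp add: power2_eq_square)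
  then have "q^((Suc k)^2) = q^(k^2) * q^(2*k) * q" by (simp add: power_add)
  then show ?thesis using q0 by (simp add: field_simps)
qed

lemma L1: "tf q m (2*k+2+e) (Suc k) = tf q m (2*k+2+e) k *
   (- (q^(2*k)) * qint q (e+2) * qint q (e+1) / (qint q (2*k+2) * qint q (2*(k+e+m+1))))"
proof -
  have e1: "2*k+2+e - 2*Suc k = e" "2*k+2+e - 2*k = e+2" "m + (2*k+2+e) - Suc k - 1 = m+k+e"
    "m + (2*k+2+e) - k - 1 = m+k+e+1" "2*k+2+e+m - Suc k = m+k+e+1" "2*k+2+e+m - k = m+k+e+2"
    by simp_all
  have p1: "qpoch (- (q^(m+k+e+1))) q (Suc k) = (1 + q^(m+k+e+1)) * qpoch (- (q^(m+k+e+2))) q k"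
    by (simp add: qpoch_Suc')
  have p2: "qpoch (- q) q (Suc k) = qpoch (- q) q k * (1 + q^(Suc k))"
    by (simp add: qpoch_Suc)
  have f1: "qfact q (m+k+e+1) = qfact q (m+k+e) * qint q (m+k+e+1)"
    using qfact_Suc[of q "m+k+e"] by simp
  have i1: "qint q (2*k+2) = qint q (k+1) * (1 + q^(k+1))"
    using qint_double[of q "k+1"] by simp
  have i2: "qint q (2*(k+e+m+1)) = qint q (m+k+e+1) * (1 + q^(m+k+e+1))"
    using qint_double[of q "k+e+m+1"] by (simp add: ac_simps)
  have nz: "qpoch (- (q^(m+k+e+2))) q k \<noteq> 0" "qpoch (- (q^(m+k+e+1))) q k \<noteq> 0"
     "1 + q^(m+k+e+1) \<noteq> 0" "1 + q^(k+1) \<noteq> 0" "qint q (k+1) \<noteq> 0" "qint q (e+1) \<noteq> 0"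
     "qint q (e+2) \<noteq> 0" "qint q (m+k+e+1) \<noteq> 0"
    by (rule qpoch_nz onepq_nz qint_nz; simp)+
  define P where "P = (- (1/q))^k * q^(k^2)"
  define t where "t = q^(2*k)"
  define u where "u = 1 + q^(k+1)"
  define w where "w = 1 + q^(m+k+e+1)"
  define Q1 where "Q1 = qpoch (- q) q k"
  define Q2 where "Q2 = qpoch (- (q^(m+k+e+2))) q k"
  define a1 where "a1 = qint q (e+1)"
  define a2 where "a2 = qint q (e+2)"
  define b where "b = qint q (k+1)"
  define c where "c = qint q (m+k+e+1)"
  define Fk where "Fk = qfact q k"
  define Fe where "Fe = qfact q e"
  define Fj where "Fj = qfact q (m+k+e)"
  have p2': "qpoch (- q) q (Suc k) = Q1 * u" unfolding Q1_def u_def p2 by simp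
  have fk: "qfact q (Suc k) = Fk * b" unfolding Fk_def b_def qfact_Suc by simp
  have ps: "(- (1/q))^(Suc k) * q^((Suc k)^2) = P * (- t)" unfolding P_def t_def pow_step ..
  have nz2: "P \<noteq> 0" "t \<noteq> 0" "u \<noteq> 0" "w \<noteq> 0" "Q1 \<noteq> 0" "Q2 \<noteq> 0" "a1 \<noteq> 0" "a2 \<noteq> 0"
    "b \<noteq> 0" "c \<noteq> 0" "Fk \<noteq> 0" "Fe \<noteq> 0" "Fj \<noteq> 0"
    unfolding P_def t_def u_def w_def Q1_def Q2_def a1_def a2_def b_def c_def Fk_def Fe_def Fj_def
    using nz q0 by auto
  show ?thesis
    unfolding tf_def e1 p1 f1 i1 i2 qfact_2 ps p2' fk
    unfolding P_def[symmetric] t_def[symmetric] u_def[symmetric] w_def[symmetric] Q1_def[symmetric]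
      Q2_def[symmetric] a1_def[symmetric] a2_def[symmetric] b_def[symmetric] c_def[symmetric]
      Fk_def[symmetric] Fe_def[symmetric] Fj_def[symmetric]
    using nz2 by (simp add: field_simps)
qed

lemma L2:
  assumes j: "m+k+d = Suc j"
  shows "tf q m (2*k+d+1) k * qint q (d+1) * qint q (2*(2*k+d+m)) =
         tf q m (2*k+d) k * qint q (2*k+d+1) * qint q (2*(k+d+m))"
proof -
  have e1: "2*k+d+1 - 2*k = d+1" "2*k+d - 2*k = d" "m+(2*k+d+1)-k-1 = Suc j" "m+(2*k+d+1)-1 = j+k+1"
    "m+(2*k+d)-k-1 = j" "m+(2*k+d)-1 = j+k" "2*k+d+1+m-k = Suc (Suc j)" "2*k+d+m-k = Suc j"
    using j by simp_all
  define P where "P = (- (1/q))^k * q^(k^2)"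
  define v where "v = 1 + q^(j+k+1)"
  define w where "w = 1 + q^(Suc j)"
  define Q1 where "Q1 = qpoch (- q) q k"
  define Qb where "Qb = qpoch (- (q^(Suc (Suc j)))) q k"
  define a1 where "a1 = qint q (d+1)"
  define a2 where "a2 = qint q (2*k+d+1)"
  define b where "b = qint q (Suc j)"
  define c where "c = qint q (j+k+1)"
  define Fn where "Fn = qfact q (2*k+d)"
  define Fk where "Fk = qfact q k"
  define Fd where "Fd = qfact q d"
  define Fj where "Fj = qfact q j"
  define Fjk where "Fjk = qfact q (j+k)"
  have vnz: "v \<noteq> 0" unfolding v_def by (rule onepq_nz) simp
  have sh: "qpoch (- (q^(Suc j))) q k * v = w * Qb"
    using qpoch_shift[of "- (q^(Suc j))" q k] unfolding v_def w_def Qb_def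
    by (simp add: power_add ac_simps)
  have Qa: "qpoch (- (q^(Suc j))) q k = w * Qb / v"
    using sh vnz by (simp add: field_simps)
  have f1: "qfact q (2*k+d+1) = Fn * a2" unfolding Fn_def a2_def using qfact_Suc[of q "2*k+d"] by simp
  have f2: "qfact q (d+1) = Fd * a1" unfolding Fd_def a1_def using qfact_Suc[of q d] by simp
  have f3: "qfact q (Suc j) = Fj * b" unfolding Fj_def b_def using qfact_Suc[of q j] by simp
  have f4: "qfact q (j+k+1) = Fjk * c" unfolding Fjk_def c_def using qfact_Suc[of q "j+k"] by simp
  have jj: "2*(2*k+d+m) = 2*(j+k+1)" using j by simp
  have i1: "qint q (2*(2*k+d+m)) = c * v"
    unfolding jj c_def v_def by (rule qint_double)
  have i2: "qint q (2*(k+d+m)) = b * w"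
    unfolding b_def w_def using qint_double[of q "Suc j"] j by (simp add: ac_simps)
  have nz2: "P \<noteq> 0" "v \<noteq> 0" "w \<noteq> 0" "Q1 \<noteq> 0" "Qb \<noteq> 0" "a1 \<noteq> 0" "a2 \<noteq> 0"
    "b \<noteq> 0" "c \<noteq> 0" "Fn \<noteq> 0" "Fk \<noteq> 0" "Fd \<noteq> 0" "Fj \<noteq> 0" "Fjk \<noteq> 0"
    unfolding P_def v_def w_def Q1_def Qb_def a1_def a2_def b_def c_def Fn_def Fk_def Fd_def Fj_def Fjk_def
    using q0 qpoch_nz[of "Suc (Suc j)" k] onepq_nz[of "j+k+1"] onepq_nz[of "Suc j"]
    by (auto intro!: qint_nz)
  show ?thesis
    unfolding tf_def e1 f1 f2 f3 f4 i1 i2 Qa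
    unfolding P_def[symmetric] Q1_def[symmetric] Qb_def[symmetric] a1_def[symmetric] a2_def[symmetric]
      b_def[symmetric] c_def[symmetric] Fn_def[symmetric] Fk_def[symmetric] Fd_def[symmetric]
      Fj_def[symmetric] Fjk_def[symmetric]
    using nz2 by (simp add: field_simps)
qed

lemma qint_eq: "qint q j = (1 - q^j) / (1 - q)" unfolding qint_def ..

lemma alg_poly:
  "qint q (2*k+d+1) * qint q (2*(k+d+m)) - q^(2*k+d) * qint q (2*m+(2*k+d)) * qint q (d+1)
   = q^(2*k) * qint q (d+1) * qint q d + qint q (2*k) * qint q (2*(k+d+m))"
proof -
  define a where "a = q^k"
  define e where "e = q^d"
  define c where "c = q^m"
  have p: "q^(2*k+d+1) = a^2*e*q" "q^(2*(k+d+m)) = a^2*e^2*c^2" "q^(2*k+d) = a^2*e"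
     "q^(2*m+(2*k+d)) = c^2*a^2*e" "q^(d+1) = e*q" "q^(2*k) = a^2"
    unfolding a_def e_def c_def by (simp_all add: power_add power_mult ac_simps power2_eq_square
       power_mult_distrib)
  show ?thesis unfolding qint_eq p e_def[symmetric]
    using qne1 by (simp add: field_simps) algebra
qed

lemma local_id:
  assumes n: "n \<ge> 1"
  shows "tt q m (n+1) k - (q^n * qint q (2*m+n) / qint q (2*m+2*n)) * tt q m n k
       = (- qint q (2*Suc k) / qint q (n+1) * tt q m (n+1) (Suc k))
       - (- qint q (2*k) / qint q (n+1) * tt q m (n+1) k)"
proof (cases "2*k \<le> n")
  case False
  show ?thesis
  proof (cases "2*k = n+1")
    case True
    then show ?thesis using False by (simp add: tt_def qint_nz)
  next
    case False2: False
    then show ?thesis using False by (simp add: tt_def)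
  qed
next
  case True
  then obtain d where nd: "n = 2*k+d" using le_Suc_ex by blast
  obtain j where j: "m+k+d = Suc j" using n nd by (metis add_is_0 mult_is_0 not0_implies_Suc
      One_nat_def not_one_le_zero add.commute)
  define x where "x = tf q m (2*k+d+1) k"
  have nzs: "qint q (2*k+d+1) \<noteq> 0" "qint q (2*(k+d+m)) \<noteq> 0" "qint q (2*k+2) \<noteq> 0"
     "qint q (2*(2*k+d+m)) \<noteq> 0"
    using j by (auto intro!: qint_nz)
  have t1: "tt q m (n+1) k = x" unfolding tt_def x_def nd by simp
  have t0: "tt q m n k = x * qint q (d+1) * qint q (2*(2*k+d+m)) / (qint q (2*k+d+1) * qint q (2*(k+d+m)))"
    unfolding tt_def x_def nd using L2[OF j] nzs by (simp add: field_simps)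
  have t2: "tt q m (n+1) (Suc k) = x * (- (q^(2*k)) * qint q (d+1) * qint q d / (qint q (2*k+2) * qint q (2*(k+d+m))))"
  proof (cases d)
    case 0 then show ?thesis unfolding tt_def nd by simp
  next
    case (Suc e)
    have "2*k+d+1 = 2*k+2+e" using Suc by simp
    then show ?thesis unfolding tt_def nd x_def using L1[of m k e] Suc by (simp add: ac_simps)
  qed
  have e2: "2*m+2*n = 2*(2*k+d+m)" "2 * Suc k = 2*k+2" "n+1 = 2*k+d+1" using nd by simp_all
  have ap: "qint q (Suc (d+k*2)) * qint q (d*2+(k*2+m*2)) - q^(d+k*2)*qint q (d+(k*2+m*2))*qint q (Suc d)
     = q^(k*2)*qint q (Suc d)*qint q d + qint q (k*2)*qint q (d*2+(k*2+m*2))"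
    using alg_poly[of k d m] by (simp add: ac_simps)
  then have ap2: "qint q (Suc (d+k*2)) * qint q (d*2+(k*2+m*2)) = q^(k*2)*qint q (Suc d)*qint q d
     + qint q (k*2)*qint q (d*2+(k*2+m*2)) + q^(d+k*2)*qint q (d+(k*2+m*2))*qint q (Suc d)"
    by (simp add: algebra_simps)
  show ?thesis unfolding t1 t0 t2 unfolding e2 using nzs unfolding nd
    apply (simp add: field_simps)
    apply (subst ap2)
    by (simp add: algebra_simps)
qed

definition SS :: "nat \<Rightarrow> nat \<Rightarrow> 'a" where
  "SS m n = (\<Sum>k<n+1. tt q m n k)"

definition RR :: "nat \<Rightarrow> nat \<Rightarrow> 'a" where
  "RR m n = q ^ (n choose 2) * ((\<Prod>j = 1..n - 1. qint q (2 * m + j)) / (\<Prod>j = 1..n - 1. qint q (2 * m + 2 * j)))"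

lemma vpoly_SS:
  assumes "n \<ge> 1"
  shows "vpoly n 1 m (1/q) q = SS m n"
proof -
  have "vpoly n 1 m (1/q) q = (\<Sum>k = 0..n div 2. tt q m n k)"
  proof -
    have "vpoly n 1 m (1/q) q = (\<Sum>k = 0..n div 2. tf q m n k)"
      using assms unfolding vpoly_def tf_def by simp
    also have "\<dots> = (\<Sum>k = 0..n div 2. tt q m n k)"
      by (intro sum.cong) (auto simp: tt_def)
    finally show ?thesis .
  qed
  also have "\<dots> = SS m n" unfolding SS_def
    by (rule sum.mono_neutral_left) (auto simp: tt_def)
  finally show ?thesis .
qed

lemma SS_rec:
  assumes n: "n \<ge> 1"
  shows "SS m (n+1) = (q^n * qint q (2*m+n) / qint q (2*m+2*n)) * SS m n"
proof -
  define rho where "rho = q^n * qint q (2*m+n) / qint q (2*m+2*n)"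
  define G where "G k = - qint q (2*k) / qint q (n+1) * tt q m (n+1) k" for k
  have "(\<Sum>k<n+2. tt q m (n+1) k - rho * tt q m n k) = (\<Sum>k<n+2. G (Suc k) - G k)"
    unfolding G_def rho_def using local_id[OF n] by simp
  also have "\<dots> = G (n+2) - G 0" by (rule sum_lessThan_telescope)
  also have "\<dots> = 0" unfolding G_def tt_def by simp
  finally have z0: "(\<Sum>k<n+2. tt q m (n+1) k - rho * tt q m n k) = 0" .
  have z: "(\<Sum>k<n+2. tt q m (n+1) k) - rho * (\<Sum>k<n+2. tt q m n k) = 0"
    using z0 by (simp only: sum_subtractf sum_distrib_left)
  have "(\<Sum>k<n+2. tt q m n k) = SS m n"
    unfolding SS_def by (simp add: tt_def)
  with z show ?thesis unfolding SS_def rho_def by simp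
qed

lemma SS_RR:
  assumes "n \<ge> 1"
  shows "SS m n = RR m n"
  using assms
proof (induction n rule: dec_induct)
  case base
  have c0: "q ^ (Suc 0 choose 2) = 1" by (simp add: binomial_eq_0)
  show ?case unfolding SS_def RR_def tt_def tf_def by (simp add: qpoch_def c0)
next
  case (step n)
  have nz: "qint q (2*m+2*n) \<noteq> 0" using step(1) by (intro qint_nz) simp
  have c: "(Suc n choose 2) = (n choose 2) + n" using step(1)
    by (cases n) (simp_all add: numeral_2_eq_2)
  have p1: "(\<Prod>j = 1..Suc n - 1. qint q (2 * m + j)) = (\<Prod>j = 1..n - 1. qint q (2 * m + j)) * qint q (2*m+n)"
    using step(1) by (cases n) (simp_all add: prod.nat_ivl_Suc' mult.commute)
  have p2: "(\<Prod>j = 1..Suc n - 1. qint q (2 * m + 2*j)) = (\<Prod>j = 1..n - 1. qint q (2 * m + 2*j)) * qint q (2*m+2*n)"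
    using step(1) by (cases n) (simp_all add: prod.nat_ivl_Suc' mult.commute)
  have "SS m (Suc n) = (q^n * qint q (2*m+n) / qint q (2*m+2*n)) * RR m n"
    using SS_rec[OF step(1)] step(3) by simp
  also have "\<dots> = RR m (Suc n)"
    unfolding RR_def c p1 p2 using nz by (simp add: field_simps power_add)
  finally show ?case .
qed

end

lemma qvar_pow: "qvar ^ j = Fract ([:0,1:]^j) 1"
  by (induction j) (simp_all add: qvar_def One_fract_def)

lemma deg_X_pow: "degree ([:0,1::rat:]^j) = j"
  by (simp add: degree_power_eq)

lemma qgood_qvar: "qgood qvar"
proof
  show "qvar \<noteq> 0" unfolding qvar_def Zero_fract_def by (simp add: eq_fract)
next
  fix j :: nat assume j: "j \<ge> 1"
  show "qvar ^ j \<noteq> 1"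
  proof
    assume "qvar ^ j = 1"
    then have "[:0,1::rat:]^j = 1" unfolding qvar_pow One_fract_def by (simp add: eq_fract)
    then have "degree ([:0,1::rat:]^j) = 0" by simp
    with j show False by (simp add: deg_X_pow)
  qed
  show "qvar ^ j \<noteq> -1"
  proof
    assume "qvar ^ j = -1"
    then have "[:0,1::rat:]^j = -1" unfolding qvar_pow One_fract_def by (simp add: eq_fract)
    then have "degree ([:0,1::rat:]^j) = 0" by simp
    with j show False by (simp add: deg_X_pow)
  qed
qed

theorem mainTheorem18:
  fixes m n :: nat
  assumes "n \<ge> 1"
  shows "vpoly n 1 m (1 / qvar) qvar =
           qvar ^ (n choose 2) *
           ((\<Prod>j = 1..n - 1. qint qvar (2 * m + j)) /
            (\<Prod>j = 1..n - 1. qint qvar (2 * m + 2 * j)))"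
proof -
  interpret Q: qgood qvar by (rule qgood_qvar)
  show ?thesis using Q.vpoly_SS[OF assms] Q.SS_RR[OF assms] unfolding Q.RR_def by simp
qed

end
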